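(* Let $G$ be a connected graph that admits a distinguishing edge coloring. Then $\theta'(G)=2$ if and only if $G\cong K_{1,2}$.
   Context: All graphs are finite and simple. An automorphism acts on edges by $\alpha(uv)=\alpha(u)\alpha(v)$. An edge coloring with $k$ colors is a surjective map $c:E(G)\to\{1,\dots,k\}$. It is distinguishing if only the identity automorphism preserves all edge colors. $\theta'(G)$ is the least integer $k$ such that every edge coloring of $G$ using exactly $k$ colors is distinguishing. *)

theory Defs
  imports Main
begin

definition simple_graph :: "'a set \<Rightarrow> 'a set set \<Rightarrow> bool" where
  "simple_graph V E \<longleftrightarrow> finite V \<and> (\<forall>e\<in>E. e \<subseteq> V \<and> card e = 2)"

definition connected_graph :: "'a set \<Rightarrow> 'a set set \<Rightarrow> bool" where
  "connected_graph V E \<longleftrightarrow> V \<noteq> {} \<and>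
     (\<forall>u\<in>V. \<forall>v\<in>V. (\<lambda>x y. {x, y} \<in> E)\<^sup>*\<^sup>* u v)"

definition graph_automorphism :: "'a set \<Rightarrow> 'a set set \<Rightarrow> ('a \<Rightarrow> 'a) \<Rightarrow> bool" where
  "graph_automorphism V E \<alpha> \<longleftrightarrow> bij_betw \<alpha> V V \<and>
     (\<forall>u\<in>V. \<forall>v\<in>V. {u, v} \<in> E \<longleftrightarrow> {\<alpha> u, \<alpha> v} \<in> E)"

definition edge_coloring :: "'a set set \<Rightarrow> nat \<Rightarrow> ('a set \<Rightarrow> nat) \<Rightarrow> bool" where
  "edge_coloring E k c \<longleftrightarrow> c ` E = {1..k}"

definition distinguishing_edge_coloring :: "'a set \<Rightarrow> 'a set set \<Rightarrow> ('a set \<Rightarrow> nat) \<Rightarrow> bool" where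
  "distinguishing_edge_coloring V E c \<longleftrightarrow>
     (\<forall>\<alpha>. graph_automorphism V E \<alpha> \<and> (\<forall>e\<in>E. c (\<alpha> ` e) = c e) \<longrightarrow> (\<forall>v\<in>V. \<alpha> v = v))"

definition admits_distinguishing_edge_coloring :: "'a set \<Rightarrow> 'a set set \<Rightarrow> bool" where
  "admits_distinguishing_edge_coloring V E \<longleftrightarrow>
     (\<exists>k c. edge_coloring E k c \<and> distinguishing_edge_coloring V E c)"

definition theta' :: "'a set \<Rightarrow> 'a set set \<Rightarrow> nat" where
  "theta' V E = (LEAST k. 1 \<le> k \<and>
      (\<forall>c. edge_coloring E k c \<longrightarrow> distinguishing_edge_coloring V E c))"

definition graph_iso :: "'a set \<Rightarrow> 'a set set \<Rightarrow> 'b set \<Rightarrow> 'b set set \<Rightarrow> bool" where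
  "graph_iso V E V' E' \<longleftrightarrow> (\<exists>f. bij_betw f V V' \<and>
     (\<forall>u\<in>V. \<forall>v\<in>V. {u, v} \<in> E \<longleftrightarrow> {f u, f v} \<in> E'))"

definition K12_V :: "nat set" where "K12_V = {0, 1, 2}"
definition K12_E :: "nat set set" where "K12_E = {{0, 1}, {0, 2}}"

end

theory Submission
  imports Defs "HOL-Library.FuncSet"
begin

definition aut where "aut V E b \<longleftrightarrow> graph_automorphism V E b"

lemma period_exists:
  assumes "finite V" "bij_betw a V V"
  shows "\<exists>N>0. \<forall>x\<in>V. (a ^^ N) x = x"
proof -
  let ?g = "\<lambda>k. restrict (a ^^ k) V"
  have sub: "range ?g \<subseteq> V \<rightarrow>\<^sub>E V"
    using bij_betw_funpow[OF assms(2)] by (auto simp: bij_betw_def) blast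
  have "finite (V \<rightarrow>\<^sub>E V)" using assms(1) by (simp add: finite_PiE)
  hence "finite (range ?g)" using sub finite_subset by blast
  hence "\<not> inj ?g" using finite_imageD infinite_UNIV_nat by blast
  then obtain i j where ij: "i \<noteq> j" "?g i = ?g j" unfolding inj_def by blast
  have key: "\<exists>N>0. \<forall>x\<in>V. (a ^^ N) x = x" if "i < j" "?g i = ?g j" for i j
  proof (intro exI[of _ "j - i"] conjI ballI)
    show "j - i > 0" using that by simp
    fix x assume x: "x \<in> V"
    have inj: "inj_on (a ^^ i) V" using bij_betw_funpow[OF assms(2)] by (auto simp: bij_betw_def)
    have "(a ^^ i) ((a ^^ (j - i)) x) = (a ^^ j) x"
      using that by (metis add_diff_inverse_nat comp_apply funpow_add less_imp_le_nat not_le)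
    also have "\<dots> = (a ^^ i) x" using fun_cong[OF that(2), of x] x by simp
    finally have eq: "(a ^^ i) ((a ^^ (j - i)) x) = (a ^^ i) x" .
    have "(a ^^ (j - i)) x \<in> V" using x bij_betw_funpow[OF assms(2), of "j-i"] by (auto simp: bij_betw_def)
    thus "(a ^^ (j - i)) x = x" using inj x eq by (auto simp: inj_on_def)
  qed
  show ?thesis
  proof (cases "i < j")
    case True thus ?thesis using key ij by blast
  next
    case False hence "j < i" using ij by simp
    thus ?thesis using key ij by metis
  qed
qed

lemma edge_pair:
  assumes "simple_graph V E" "e \<in> E"
  obtains x y where "x \<in> V" "y \<in> V" "x \<noteq> y" "e = {x, y}"
  using assms unfolding simple_graph_def by (metis card_2_iff insert_subset)

lemma aut_edge:
  assumes "simple_graph V E" "graph_automorphism V E b" "e \<in> E"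
  shows "b ` e \<in> E"
proof -
  obtain x y where "x \<in> V" "y \<in> V" "e = {x, y}" using edge_pair assms(1,3) by metis
  thus ?thesis using assms unfolding graph_automorphism_def by auto
qed

lemma aut_funpow:
  assumes "graph_automorphism V E b"
  shows "graph_automorphism V E (b ^^ k)"
proof (induction k)
  case 0 thus ?case by (auto simp: graph_automorphism_def bij_betw_def)
next
  case (Suc k)
  have bij: "bij_betw (b ^^ Suc k) V V"
    using bij_betw_funpow assms unfolding graph_automorphism_def by blast
  have "(b ^^ k) x \<in> V" if "x \<in> V" for x
    using Suc that unfolding graph_automorphism_def bij_betw_def by blast
  thus ?case using bij Suc assms unfolding graph_automorphism_def by auto
qed

lemma aut_inj_edge:
  assumes "simple_graph V E" "graph_automorphism V E b" "e \<in> E" "f \<in> E" "b ` e = b ` f"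
  shows "e = f"
proof -
  have "inj_on b V" using assms(2) by (simp add: graph_automorphism_def bij_betw_def)
  moreover have "e \<subseteq> V" "f \<subseteq> V" using assms(1,3,4) by (auto simp: simple_graph_def)
  ultimately show ?thesis using assms(5) by (simp add: inj_on_image_eq_iff)
qed

lemma Kprime:
  assumes P2: "\<forall>c. edge_coloring E 2 c \<longrightarrow> distinguishing_edge_coloring V E c"
    and aut: "graph_automorphism V E b"
    and S: "S \<subseteq> E" "S \<noteq> {}" "S \<noteq> E" and inv: "\<forall>e\<in>E. b ` e \<in> S \<longleftrightarrow> e \<in> S"
  shows "\<forall>v\<in>V. b v = v"
proof -
  define c where "c = (\<lambda>e. if e \<in> S then 1 else (2::nat))"
  have "c ` E = {1..2}"
  proof
    show "c ` E \<subseteq> {1..2}" by (auto simp: c_def)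
    obtain e1 where "e1 \<in> S" using S by blast
    moreover obtain e2 where "e2 \<in> E" "e2 \<notin> S" using S by blast
    ultimately have "1 \<in> c ` E" "2 \<in> c ` E" using S unfolding c_def by (auto simp: image_iff intro!: bexI)
    moreover have "{1..2::nat} = {1, 2}" by auto
    ultimately show "{1..2} \<subseteq> c ` E" by simp
  qed
  hence "distinguishing_edge_coloring V E c" using P2 by (simp add: edge_coloring_def)
  moreover have "\<forall>e\<in>E. c (b ` e) = c e" using inv by (simp add: c_def)
  ultimately show ?thesis using aut unfolding distinguishing_edge_coloring_def by blast
qed

lemma Kfix:
  assumes G: "simple_graph V E"
    and P2: "\<forall>c. edge_coloring E 2 c \<longrightarrow> distinguishing_edge_coloring V E c"
    and adm: "admits_distinguishing_edge_coloring V E"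
    and aut: "graph_automorphism V E b"
    and e1: "e1 \<in> E" "b ` e1 = e1"
  shows "\<forall>v\<in>V. b v = v"
proof (cases "{e\<in>E. b ` e = e} = E")
  case True
  obtain k c where c: "edge_coloring E k c" "distinguishing_edge_coloring V E c"
    using adm unfolding admits_distinguishing_edge_coloring_def by blast
  have "\<forall>e\<in>E. c (b ` e) = c e" using True by (metis (mono_tags, lifting) mem_Collect_eq)
  thus ?thesis using c aut unfolding distinguishing_edge_coloring_def by blast
next
  case False
  show ?thesis
  proof (rule Kprime[OF P2 aut, of "{e\<in>E. b ` e = e}"])
    show "{e \<in> E. b ` e = e} \<noteq> {}" using e1 by blast
    show "\<forall>e\<in>E. (b ` e \<in> {e \<in> E. b ` e = e}) = (e \<in> {e \<in> E. b ` e = e})"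
    proof
      fix e assume e: "e \<in> E"
      have be: "b ` e \<in> E" using aut_edge[OF G aut e] .
      show "(b ` e \<in> {e \<in> E. b ` e = e}) = (e \<in> {e \<in> E. b ` e = e})"
        using aut_inj_edge[OF G aut be e] be e by auto
    qed
  qed (use False in auto)
qed

lemma conn_edge:
  assumes "connected_graph V E" "c \<in> V" "y \<in> V" "y \<noteq> c"
  shows "\<exists>z. {z, y} \<in> E"
proof -
  have "(\<lambda>x y. {x, y} \<in> E)\<^sup>*\<^sup>* c y" using assms unfolding connected_graph_def by blast
  thus ?thesis using assms(4) by (cases rule: rtranclp.cases) auto
qed

definition swp :: "'a \<Rightarrow> 'a \<Rightarrow> 'a \<Rightarrow> 'a" where
  "swp a b x = (if x = a then b else if x = b then a else x)"

lemma swp_bij: "a \<in> V \<Longrightarrow> b \<in> V \<Longrightarrow> bij_betw (swp a b) V V"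
  by (rule bij_betw_byWitness[where f'="swp a b"]) (auto simp: swp_def)

lemma star_case:
  assumes G: "simple_graph V E" and conn: "connected_graph V E"
    and P2: "\<forall>c. edge_coloring E 2 c \<longrightarrow> distinguishing_edge_coloring V E c"
    and adm: "admits_distinguishing_edge_coloring V E"
    and c: "c \<in> V" and all: "\<forall>e\<in>E. c \<in> e" and ne: "E \<noteq> {}"
    and aut: "graph_automorphism V E a" and nt: "\<exists>v\<in>V. a v \<noteq> v"
  shows "graph_iso V E K12_V K12_E"
proof -
  define L where "L = V - {c}"
  have cy: "{c, y} \<in> E" if "y \<in> L" for y
  proof -
    have y: "y \<in> V" "y \<noteq> c" using that unfolding L_def by auto
    obtain z where z: "{z, y} \<in> E" using conn_edge[OF conn c y] by blast
    have "c \<in> {z, y}" using bspec[OF all z] .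
    hence "c = z" using y by simp
    thus ?thesis using z by simp
  qed
  have char: "{u, v} \<in> E \<longleftrightarrow> (u = c \<and> v \<in> L \<or> v = c \<and> u \<in> L)" if "u \<in> V" "v \<in> V" for u v
  proof
    assume uv: "{u, v} \<in> E"
    have "c \<in> {u, v}" using bspec[OF all uv] .
    hence c1: "c = u \<or> c = v" by simp
    have "card {u, v} = 2" using uv G unfolding simple_graph_def by blast
    hence "u \<noteq> v" by (cases "u = v") auto
    thus "u = c \<and> v \<in> L \<or> v = c \<and> u \<in> L" using that c1 unfolding L_def by blast
  next
    assume "u = c \<and> v \<in> L \<or> v = c \<and> u \<in> L"
    thus "{u, v} \<in> E" using cy[of v] cy[of u] by (metis insert_commute)
  qed
  have finL: "finite L" using G by (simp add: simple_graph_def L_def)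
  have VL: "V = insert c L" using c by (auto simp: L_def)
  have cL: "c \<notin> L" by (simp add: L_def)
  have "L \<noteq> {}"
  proof
    assume "L = {}"
    obtain e where "e \<in> E" using ne by blast
    then obtain x y where "x \<in> V" "y \<in> V" "x \<noteq> y" "e = {x, y}" using edge_pair G by metis
    thus False using \<open>L = {}\<close> VL by auto
  qed
  hence "card L \<noteq> 0" using finL by simp
  moreover have "card L \<noteq> 1"
  proof
    assume "card L = 1"
    then obtain y where y: "L = {y}" by (rule card_1_singletonE)
    have VV: "V = {c, y}" using VL y by simp
    have E1: "{c, y} \<in> E" using cy y by blast
    have "a ` V = V" using aut unfolding graph_automorphism_def by (simp add: bij_betw_imp_surj_on)
    hence "a ` {c, y} = {c, y}" using VV by simp
    hence "\<forall>v\<in>V. a v = v" by (rule Kfix[OF G P2 adm aut E1])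
    thus False using nt by blast
  qed
  moreover have "\<not> card L \<ge> 3"
  proof
    assume "card L \<ge> 3"
    then obtain y1 y2 y3 where ys: "y1 \<in> L" "y2 \<in> L" "y3 \<in> L" "y1 \<noteq> y2" "y1 \<noteq> y3" "y2 \<noteq> y3"
    proof -
      obtain T where "T \<subseteq> L" "card T = 3" using obtain_subset_with_card_n[OF \<open>card L \<ge> 3\<close>] by metis
      thus ?thesis using that by (auto simp: card_3_iff)
    qed
    define s where "s = swp y1 y2"
    have sV: "y1 \<in> V" "y2 \<in> V" using ys VL by auto
    have sc: "s c = c" using ys cL by (auto simp: s_def swp_def)
    have sL: "s x \<in> L \<longleftrightarrow> x \<in> L" "s x = c \<longleftrightarrow> x = c" for x
      using ys cL by (auto simp: s_def swp_def)
    have auts: "graph_automorphism V E s"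
      unfolding graph_automorphism_def
    proof (intro conjI ballI)
      show "bij_betw s V V" unfolding s_def using swp_bij sV by metis
      fix u v assume uv: "u \<in> V" "v \<in> V"
      have "s u \<in> V" "s v \<in> V" using uv sV by (auto simp: s_def swp_def)
      thus "({u, v} \<in> E) = ({s u, s v} \<in> E)" using char uv sL by simp
    qed
    have E3: "{c, y3} \<in> E" using cy ys by blast
    have "s ` {c, y3} = {c, y3}" using ys sc by (auto simp: s_def swp_def)
    hence "\<forall>v\<in>V. s v = v" by (rule Kfix[OF G P2 adm auts E3])
    thus False using sV ys by (auto simp: s_def swp_def)
  qed
  ultimately have "card L = 2" by linarith
  then obtain y1 y2 where ys: "L = {y1, y2}" "y1 \<noteq> y2" by (meson card_2_iff)
  define f where "f x = (if x = c then 0 else if x = y1 then 1 else (2::nat))" for x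
  have "bij_betw f V K12_V"
    unfolding bij_betw_def inj_on_def K12_V_def using VL ys cL by (auto simp: f_def)
  moreover have "\<forall>u\<in>V. \<forall>v\<in>V. {u, v} \<in> E \<longleftrightarrow> {f u, f v} \<in> K12_E"
  proof (intro ballI)
    fix u v assume uv: "u \<in> V" "v \<in> V"
    have f0: "f c = 0" "f y1 = 1" "f y2 = 2" using ys cL by (auto simp: f_def)
    have "u = c \<or> u = y1 \<or> u = y2" "v = c \<or> v = y1 \<or> v = y2" using uv VL ys by auto
    thus "({u, v} \<in> E) = ({f u, f v} \<in> K12_E)" unfolding char[OF uv] using ys cL f0
      by (elim disjE) (auto simp: K12_E_def doubleton_eq_iff)
  qed
  ultimately show ?thesis unfolding graph_iso_def by blast
qed

lemma pw_V: "bij_betw a V V \<Longrightarrow> x \<in> V \<Longrightarrow> (a ^^ k) x \<in> V"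
  using bij_betw_funpow[of a V k] by (auto simp: bij_betw_def)

lemma pw_add: "(a ^^ (i + j)) x = (a ^^ i) ((a ^^ j) x)"
  by (simp add: funpow_add)

lemma pw_N:
  assumes per: "\<forall>x\<in>V. (a ^^ N) x = x" and bij: "bij_betw a V V" and x: "x \<in> V"
  shows "(a ^^ (N * k)) x = x"
proof (induction k)
  case 0 thus ?case by simp
next
  case (Suc k)
  have "(a ^^ (N * Suc k)) x = (a ^^ N) ((a ^^ (N * k)) x)" by (simp add: pw_add[symmetric])
  thus ?case using Suc per x by simp
qed

lemma pw_neg:
  assumes per: "\<forall>x\<in>V. (a ^^ N) x = x" and bij: "bij_betw a V V" and x: "x \<in> V" and N: "N > 0"
  shows "(a ^^ ((N - 1) * k)) ((a ^^ k) x) = x" "(a ^^ k) ((a ^^ ((N - 1) * k)) x) = x"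
proof -
  have e: "(N - 1) * k + k = N * k" using N by (cases N) auto
  show "(a ^^ ((N - 1) * k)) ((a ^^ k) x) = x"
    using pw_N[OF per bij x, of k] e by (simp add: pw_add[symmetric])
  show "(a ^^ k) ((a ^^ ((N - 1) * k)) x) = x"
    using pw_N[OF per bij x, of k] e by (simp add: pw_add[symmetric] add.commute)
qed

lemma pw_negneg:
  assumes per: "\<forall>x\<in>V. (a ^^ N) x = x" and bij: "bij_betw a V V" and x: "x \<in> V" and N: "N > 0"
  shows "(a ^^ ((N - 1) * ((N - 1) * k))) x = (a ^^ k) x"
proof (cases N)
  case 0 thus ?thesis using N by simp
next
  case (Suc M)
  show ?thesis
  proof (cases M)
    case 0
    have "(a ^^ k) x = x" using pw_N[OF per bij x, of k] Suc 0 by simp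
    thus ?thesis using Suc 0 by simp
  next
    case (Suc M')
    have "(N - 1) * ((N - 1) * k) = k + N * (M' * k)"
      using \<open>N = Suc M\<close> Suc by (simp add: algebra_simps)
    thus ?thesis using pw_N[OF per bij x, of "M' * k"] by (simp add: pw_add)
  qed
qed

lemma refl_uu:
  assumes per: "\<forall>x\<in>V. (a ^^ N) x = x" and bij: "bij_betw a V V" and N: "N > 0"
    and x0: "x0 \<in> V" and y0: "y0 \<in> V"
    and SS: "\<forall>k. (a ^^ k) x0 = x0 \<longleftrightarrow> (a ^^ k) y0 = y0"
    and eq: "(a ^^ k) x0 = (a ^^ j) x0"
  shows "(a ^^ ((N - 1) * k)) y0 = (a ^^ ((N - 1) * j)) y0"
proof -
  let ?n = "\<lambda>k. (N - 1) * k"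
  have "(a ^^ (?n k + j)) x0 = (a ^^ (?n k)) ((a ^^ k) x0)" using eq by (simp add: pw_add)
  also have "\<dots> = x0" using pw_neg[OF per bij x0 N] by simp
  finally have "(a ^^ (?n k + j)) y0 = y0" using SS by blast
  hence "(a ^^ (?n j)) y0 = (a ^^ (?n j)) ((a ^^ (?n k + j)) y0)" by simp
  also have "\<dots> = (a ^^ (?n k)) ((a ^^ j) ((a ^^ (?n j)) y0))"
    by (simp only: pw_add[symmetric]) (simp add: ac_simps)
  also have "\<dots> = (a ^^ (?n k)) y0" using pw_neg[OF per bij y0 N] by simp
  finally show ?thesis by simp
qed

lemma refl_uv:
  assumes per: "\<forall>x\<in>V. (a ^^ N) x = x" and bij: "bij_betw a V V" and N: "N > 0"
    and x0: "x0 \<in> V" and y0: "y0 \<in> V"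
    and eq: "(a ^^ k) x0 = (a ^^ j) y0"
  shows "(a ^^ ((N - 1) * k)) y0 = (a ^^ ((N - 1) * j)) x0"
proof -
  let ?n = "\<lambda>k. (N - 1) * k"
  have "(a ^^ (?n j)) x0 = (a ^^ (?n j)) ((a ^^ (?n k)) ((a ^^ k) x0))" using pw_neg[OF per bij x0 N] by simp
  also have "\<dots> = (a ^^ (?n k)) ((a ^^ (?n j)) ((a ^^ j) y0))" using eq
    by (simp only: pw_add[symmetric]) (simp add: ac_simps)
  also have "\<dots> = (a ^^ (?n k)) y0" using pw_neg[OF per bij y0 N] by simp
  finally show ?thesis by simp
qed

lemma reflection:
  assumes G: "simple_graph V E" and aut: "graph_automorphism V E a"
    and per: "\<forall>x\<in>V. (a ^^ N) x = x" and N: "N > 0"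
    and u0: "u0 \<in> V" and v0: "v0 \<in> V"
    and orb: "\<forall>e\<in>E. \<exists>k. e = (a ^^ k) ` {u0, v0}"
    and e0: "{u0, v0} \<in> E"
    and SS: "\<forall>k. (a ^^ k) u0 = u0 \<longleftrightarrow> (a ^^ k) v0 = v0"
  shows "\<exists>b. graph_automorphism V E b \<and> b u0 = v0 \<and> b v0 = u0"
proof -
  have bij: "bij_betw a V V" using aut by (simp add: graph_automorphism_def)
  let ?p = "\<lambda>k x. (a ^^ k) x"
  let ?n = "\<lambda>k. (N - 1) * k"
  define R where "R x y \<longleftrightarrow> (\<exists>k. (x = ?p k u0 \<and> y = ?p (?n k) v0) \<or> (x = ?p k v0 \<and> y = ?p (?n k) u0))" for x y
  have SS': "\<forall>k. (a ^^ k) v0 = v0 \<longleftrightarrow> (a ^^ k) u0 = u0" using SS by blast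
  have funR: "y = y'" if Rxy: "R x y" "R x y'" for x y y'
  proof -
    obtain k where k: "(x = ?p k u0 \<and> y = ?p (?n k) v0) \<or> (x = ?p k v0 \<and> y = ?p (?n k) u0)"
      using Rxy(1) unfolding R_def by blast
    obtain j where j: "(x = ?p j u0 \<and> y' = ?p (?n j) v0) \<or> (x = ?p j v0 \<and> y' = ?p (?n j) u0)"
      using Rxy(2) unfolding R_def by blast
    show ?thesis
      using k j
      apply (elim disjE conjE)
      subgoal using refl_uu[OF per bij N u0 v0 SS, of k j] by simp
      subgoal using refl_uv[OF per bij N u0 v0, of k j] by simp
      subgoal using refl_uv[OF per bij N v0 u0, of k j] by simp
      subgoal using refl_uu[OF per bij N v0 u0 SS', of k j] by simp
      done
  qed
  define b where "b x = (if \<exists>y. R x y then (SOME y. R x y) else x)" for x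
  have bR: "b x = y" if "R x y" for x y
  proof -
    have "R x (SOME y. R x y)" using that by (rule someI)
    thus ?thesis using that funR unfolding b_def by auto
  qed
  have bu: "b (?p k u0) = ?p (?n k) v0" for k by (rule bR) (auto simp: R_def)
  have bv: "b (?p k v0) = ?p (?n k) u0" for k by (rule bR) (auto simp: R_def)
  have bV: "b x \<in> V" if "x \<in> V" for x
  proof (cases "\<exists>y. R x y")
    case True
    then obtain y where Rxy: "R x y" by blast
    then obtain k where "y = ?p (?n k) v0 \<or> y = ?p (?n k) u0" unfolding R_def by blast
    moreover have "b x = y" using bR Rxy by blast
    ultimately show ?thesis using pw_V[OF bij u0] pw_V[OF bij v0] by auto
  next
    case False thus ?thesis using that by (simp add: b_def)
  qed
  have bb: "b (b x) = x" if "x \<in> V" for x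
  proof (cases "\<exists>y. R x y")
    case True
    then obtain k where "x = ?p k u0 \<or> x = ?p k v0" unfolding R_def by blast
    thus ?thesis
    proof
      assume "x = ?p k u0"
      thus ?thesis using bu bv pw_negneg[OF per bij u0 N] by simp
    next
      assume "x = ?p k v0"
      thus ?thesis using bu bv pw_negneg[OF per bij v0 N] by simp
    qed
  next
    case False thus ?thesis by (simp add: b_def)
  qed
  have fwd: "{b u, b v} \<in> E" if uvE: "{u, v} \<in> E" for u v
  proof -
    obtain k where k: "{u, v} = ?p k ` {u0, v0}" using orb uvE by blast
    hence "{u, v} = {?p k u0, ?p k v0}" by simp
    hence "u = ?p k u0 \<and> v = ?p k v0 \<or> u = ?p k v0 \<and> v = ?p k u0" by (simp add: doubleton_eq_iff)
    hence "{b u, b v} = {?p (?n k) v0, ?p (?n k) u0}"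
    proof
      assume "u = ?p k u0 \<and> v = ?p k v0" thus ?thesis using bu bv by simp
    next
      assume "u = ?p k v0 \<and> v = ?p k u0" thus ?thesis using bu bv by (simp add: insert_commute)
    qed
    also have "\<dots> = ?p (?n k) ` {u0, v0}" by (simp add: insert_commute)
    also have "\<dots> \<in> E" using aut_edge[OF G aut_funpow[OF aut] e0] .
    finally show ?thesis .
  qed
  have "graph_automorphism V E b"
    unfolding graph_automorphism_def
  proof (intro conjI ballI)
    show "bij_betw b V V" by (rule bij_betw_byWitness[where f'=b]) (use bb bV in auto)
    fix u v assume "u \<in> V" "v \<in> V"
    show "({u, v} \<in> E) = ({b u, b v} \<in> E)"
    proof
      assume "{u, v} \<in> E" thus "{b u, b v} \<in> E" by (rule fwd)
    next
      assume "{b u, b v} \<in> E"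
      hence "{b (b u), b (b v)} \<in> E" by (rule fwd)
      thus "{u, v} \<in> E" using bb \<open>u \<in> V\<close> \<open>v \<in> V\<close> by simp
    qed
  qed
  moreover have "b u0 = v0" using bu[of 0] by simp
  moreover have "b v0 = u0" using bv[of 0] by simp
  ultimately show ?thesis by blast
qed

lemma star_from:
  assumes G: "simple_graph V E"
    and P2: "\<forall>c. edge_coloring E 2 c \<longrightarrow> distinguishing_edge_coloring V E c"
    and aut: "graph_automorphism V E a"
    and x0: "x0 \<in> V" and y0: "y0 \<in> V" and e0: "{x0, y0} \<in> E"
    and fx: "(a ^^ k) x0 = x0" and fy: "(a ^^ k) y0 \<noteq> y0"
  shows "\<forall>e\<in>E. x0 \<in> e"
proof (rule ccontr)
  assume nall: "\<not> (\<forall>e\<in>E. x0 \<in> e)"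
  let ?b = "a ^^ k"
  have autb: "graph_automorphism V E ?b" by (rule aut_funpow[OF aut])
  have injb: "inj_on ?b V" using autb by (simp add: graph_automorphism_def bij_betw_def)
  have "\<forall>v\<in>V. ?b v = v"
  proof (rule Kprime[OF P2 autb, of "{e\<in>E. x0 \<in> e}"])
    show "{e \<in> E. x0 \<in> e} \<noteq> {}" using e0 by blast
    show "{e \<in> E. x0 \<in> e} \<noteq> E" using nall by blast
    show "\<forall>e\<in>E. (?b ` e \<in> {e \<in> E. x0 \<in> e}) = (e \<in> {e \<in> E. x0 \<in> e})"
    proof
      fix e assume e: "e \<in> E"
      have eV: "e \<subseteq> V" using G e by (simp add: simple_graph_def)
      have "x0 \<in> ?b ` e \<longleftrightarrow> x0 \<in> e"
      proof
        assume "x0 \<in> ?b ` e"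
        then obtain y where y: "y \<in> e" "?b y = x0" by blast
        hence "?b y = ?b x0" using fx by simp
        hence "y = x0" using injb y eV x0 by (auto simp: inj_on_def)
        thus "x0 \<in> e" using y by simp
      next
        assume "x0 \<in> e" thus "x0 \<in> ?b ` e" using fx by (metis imageI)
      qed
      thus "(?b ` e \<in> {e \<in> E. x0 \<in> e}) = (e \<in> {e \<in> E. x0 \<in> e})"
        using aut_edge[OF G autb e] e by simp
    qed
  qed auto
  thus False using fy y0 by blast
qed

lemma theta_facts:
  assumes G: "simple_graph V E" and th: "theta' V E = 2"
  shows "\<forall>c. edge_coloring E 2 c \<longrightarrow> distinguishing_edge_coloring V E c"
    and "\<exists>c. edge_coloring E 1 c \<and> \<not> distinguishing_edge_coloring V E c"
proof -
  let ?P = "\<lambda>k. 1 \<le> k \<and> (\<forall>c. edge_coloring E k c \<longrightarrow> distinguishing_edge_coloring V E c)"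
  have finE: "finite E"
  proof -
    have "E \<subseteq> Pow V" using G by (auto simp: simple_graph_def)
    moreover have "finite (Pow V)" using G by (simp add: simple_graph_def)
    ultimately show ?thesis by (rule finite_subset)
  qed
  have "?P (card E + 1)"
  proof (intro conjI allI impI)
    fix c assume "edge_coloring E (card E + 1) c"
    hence "c ` E = {1..card E + 1}" by (simp add: edge_coloring_def)
    hence "card (c ` E) = card E + 1" by simp
    moreover have "card (c ` E) \<le> card E" using finE by (rule card_image_le)
    ultimately show "distinguishing_edge_coloring V E c" by simp
  qed simp
  hence PL: "?P (LEAST k. ?P k)" by (rule LeastI)
  have L2: "(LEAST k. ?P k) = 2" using th unfolding theta'_def .
  have P2: "?P 2" using PL unfolding L2 .
  thus "\<forall>c. edge_coloring E 2 c \<longrightarrow> distinguishing_edge_coloring V E c" by blast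
  have lt: "1 < (LEAST k. ?P k)" unfolding L2 by simp
  have "\<not> ?P 1" using not_less_Least[of 1 ?P, OF lt] .
  thus "\<exists>c. edge_coloring E 1 c \<and> \<not> distinguishing_edge_coloring V E c" by simp
qed

lemma iso_struct:
  assumes G: "simple_graph V E" and iso: "graph_iso V E K12_V K12_E"
  shows "\<exists>a b1 b2. a \<noteq> b1 \<and> a \<noteq> b2 \<and> b1 \<noteq> b2 \<and> V = {a, b1, b2} \<and> E = {{a, b1}, {a, b2}}"
proof -
  obtain f where bij: "bij_betw f V K12_V" and fe: "\<forall>u\<in>V. \<forall>v\<in>V. {u, v} \<in> E \<longleftrightarrow> {f u, f v} \<in> K12_E"
    using iso unfolding graph_iso_def by blast
  have img: "f ` V = {0, 1, 2}" using bij by (simp add: bij_betw_def K12_V_def)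
  have inj: "inj_on f V" using bij by (simp add: bij_betw_def)
  obtain a where a: "a \<in> V" "f a = 0" using img by (metis imageE insertI1)
  obtain b1 where b1: "b1 \<in> V" "f b1 = 1" using img by (metis imageE insertI1 insertI2)
  obtain b2 where b2: "b2 \<in> V" "f b2 = 2" using img by (metis imageE insertI1 insertI2)
  have d: "a \<noteq> b1" "a \<noteq> b2" "b1 \<noteq> b2" using a b1 b2 by auto
  have VV: "V = {a, b1, b2}"
  proof
    show "{a, b1, b2} \<subseteq> V" using a b1 b2 by simp
    show "V \<subseteq> {a, b1, b2}"
    proof
      fix x assume x: "x \<in> V"
      hence "f x \<in> {0, 1, 2}" using img by blast
      hence "f x = f a \<or> f x = f b1 \<or> f x = f b2" using a b1 b2 by auto
      thus "x \<in> {a, b1, b2}" using inj x a b1 b2 unfolding inj_on_def by blast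
    qed
  qed
  have EE: "E = {{a, b1}, {a, b2}}"
  proof
    show "E \<subseteq> {{a, b1}, {a, b2}}"
    proof
      fix e assume e: "e \<in> E"
      then obtain x y where xy: "x \<in> V" "y \<in> V" "x \<noteq> y" "e = {x, y}" using edge_pair G by metis
      hence "{f x, f y} \<in> K12_E" using fe e by blast
      moreover have "x = a \<or> x = b1 \<or> x = b2" "y = a \<or> y = b1 \<or> y = b2" using xy VV by auto
      ultimately show "e \<in> {{a, b1}, {a, b2}}" using xy a b1 b2
        by (auto simp: K12_E_def doubleton_eq_iff insert_commute)
    qed
    have "{a, b1} \<in> E" "{a, b2} \<in> E" using fe a b1 b2 by (auto simp: K12_E_def)
    thus "{{a, b1}, {a, b2}} \<subseteq> E" by simp
  qed
  show ?thesis using d VV EE by blast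
qed

lemma P3_theta:
  assumes d: "a \<noteq> b1" "a \<noteq> b2" "b1 \<noteq> b2" and VV: "V = {a, b1, b2}" and EE: "E = {{a, b1}, {a, b2}}"
  shows "theta' V E = 2"
proof -
  let ?P = "\<lambda>k. 1 \<le> k \<and> (\<forall>c. edge_coloring E k c \<longrightarrow> distinguishing_edge_coloring V E c)"
  have ne: "{a, b1} \<noteq> {a, b2}" using d by (auto simp: doubleton_eq_iff)
  have edges: "{u, v} \<in> E \<longleftrightarrow> (u = a \<and> (v = b1 \<or> v = b2)) \<or> (v = a \<and> (u = b1 \<or> u = b2))" for u v
    using d unfolding EE by (auto simp: doubleton_eq_iff)
  have not1: "\<not> ?P 1"
  proof
    assume P1: "?P 1"
    have "edge_coloring E 1 (\<lambda>_. 1)" unfolding edge_coloring_def EE by auto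
    hence dist: "distinguishing_edge_coloring V E (\<lambda>_. 1)" using P1 by blast
    let ?s = "swp b1 b2"
    have "graph_automorphism V E ?s"
      unfolding graph_automorphism_def
    proof (intro conjI ballI)
      show "bij_betw ?s V V" using swp_bij[of b1 V b2] VV by simp
      fix u v assume "u \<in> V" "v \<in> V"
      show "({u, v} \<in> E) = ({?s u, ?s v} \<in> E)" unfolding edges using d by (auto simp: swp_def)
    qed
    hence "\<forall>v\<in>V. ?s v = v" using dist unfolding distinguishing_edge_coloring_def by blast
    thus False using d VV by (auto simp: swp_def)
  qed
  have P2: "?P 2"
  proof (intro conjI allI impI)
    fix c assume "edge_coloring E 2 c"
    hence cE: "c ` E = {1..2}" by (simp add: edge_coloring_def)
    have cne: "c {a, b1} \<noteq> c {a, b2}"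
    proof
      assume "c {a, b1} = c {a, b2}"
      hence "c ` E = {c {a, b1}}" unfolding EE by auto
      moreover have "{1..2::nat} = {1, 2}" by auto
      ultimately have "{c {a, b1}} = {1, 2::nat}" using cE by simp
      hence "(1::nat) \<in> {c {a, b1}}" "(2::nat) \<in> {c {a, b1}}" by auto
      thus False by simp
    qed
    show "distinguishing_edge_coloring V E c"
      unfolding distinguishing_edge_coloring_def
    proof (intro allI impI)
      fix s assume as: "graph_automorphism V E s \<and> (\<forall>e\<in>E. c (s ` e) = c e)"
      have G: "simple_graph V E" unfolding simple_graph_def VV EE using d by auto
      have e1: "s ` {a, b1} = {a, b1}"
      proof -
        have "s ` {a, b1} \<in> E" using aut_edge[OF G, of s "{a, b1}"] as EE by blast
        hence "s ` {a, b1} = {a, b1} \<or> s ` {a, b1} = {a, b2}" using EE by simp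
        moreover have "c (s ` {a, b1}) = c {a, b1}" using as EE by simp
        ultimately show ?thesis using cne by force
      qed
      have e2: "s ` {a, b2} = {a, b2}"
      proof -
        have "s ` {a, b2} \<in> E" using aut_edge[OF G, of s "{a, b2}"] as EE by blast
        hence "s ` {a, b2} = {a, b1} \<or> s ` {a, b2} = {a, b2}" using EE by simp
        moreover have "c (s ` {a, b2}) = c {a, b2}" using as EE by simp
        ultimately show ?thesis using cne by force
      qed
      have inj: "inj_on s V" using as by (simp add: graph_automorphism_def bij_betw_def)
      have "s a \<in> {a, b1}" "s a \<in> {a, b2}" using e1 e2 by (metis imageI insertI1)+
      hence sa: "s a = a" using d by auto
      have "s b1 \<in> {a, b1}" using e1 by (metis imageI insertI1 insertI2)
      moreover have "s b1 \<noteq> s a" using inj d VV unfolding inj_on_def by blast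
      ultimately have "s b1 = b1" using sa by auto
      moreover have "s b2 \<in> {a, b2}" using e2 by (metis imageI insertI1 insertI2)
      moreover have "s b2 \<noteq> s a" using inj d VV unfolding inj_on_def by blast
      ultimately have "s b1 = b1" "s b2 = b2" using sa by auto
      thus "\<forall>v\<in>V. s v = v" using sa VV by simp
    qed
  qed simp
  show ?thesis unfolding theta'_def
  proof (rule Least_equality)
    show "?P 2" by (rule P2)
    fix k assume "?P k"
    thus "2 \<le> k" using not1 by (cases "k = 1") auto
  qed
qed

lemma forward:
  assumes G: "simple_graph V E" and conn: "connected_graph V E"
    and adm: "admits_distinguishing_edge_coloring V E" and th: "theta' V E = 2"
  shows "graph_iso V E K12_V K12_E"
proof -
  have P2: "\<forall>c. edge_coloring E 2 c \<longrightarrow> distinguishing_edge_coloring V E c"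
    using theta_facts(1)[OF G th] .
  obtain c1 where c1: "edge_coloring E 1 c1" "\<not> distinguishing_edge_coloring V E c1"
    using theta_facts(2)[OF G th] by blast
  obtain a where aut: "graph_automorphism V E a" and nt: "\<exists>v\<in>V. a v \<noteq> v"
    using c1(2) unfolding distinguishing_edge_coloring_def by blast
  have "E \<noteq> {}" using c1(1) unfolding edge_coloring_def by auto
  then obtain e0 where e0E: "e0 \<in> E" by blast
  then obtain u0 v0 where u0: "u0 \<in> V" and v0: "v0 \<in> V" and uv: "u0 \<noteq> v0" and e0: "e0 = {u0, v0}"
    using edge_pair G by metis
  have E0: "{u0, v0} \<in> E" using e0E e0 by simp
  have bij: "bij_betw a V V" using aut by (simp add: graph_automorphism_def)
  have finV: "finite V" using G by (simp add: simple_graph_def)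
  obtain N where N: "N > 0" and per: "\<forall>x\<in>V. (a ^^ N) x = x"
    using period_exists[OF finV bij] by blast
  have orb: "\<forall>e\<in>E. \<exists>k. e = (a ^^ k) ` {u0, v0}"
  proof (rule ccontr)
    assume no: "\<not> (\<forall>e\<in>E. \<exists>k. e = (a ^^ k) ` {u0, v0})"
    let ?S = "{e\<in>E. \<exists>k. e = (a ^^ k) ` {u0, v0}}"
    have "\<forall>v\<in>V. a v = v"
    proof (rule Kprime[OF P2 aut, of ?S])
      have "(a ^^ 0) ` {u0, v0} = {u0, v0}" by simp
      hence "{u0, v0} \<in> ?S" using E0 by blast
      thus "?S \<noteq> {}" by blast
      show "?S \<noteq> E" using no by blast
      show "\<forall>e\<in>E. (a ` e \<in> ?S) = (e \<in> ?S)"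
      proof
        fix e assume e: "e \<in> E"
        have eV: "e \<subseteq> V" using G e by (simp add: simple_graph_def)
        have ae: "a ` e \<in> E" using aut_edge[OF G aut e] .
        show "(a ` e \<in> ?S) = (e \<in> ?S)"
        proof
          assume "a ` e \<in> ?S"
          then obtain k where k: "a ` e = (a ^^ k) ` {u0, v0}" by blast
          have "e = (a ^^ (N - 1)) ` (a ` e)"
          proof -
            have "(a ^^ (N - 1)) (a x) = x" if "x \<in> V" for x
            proof -
              have "(a ^^ (N - 1)) (a x) = (a ^^ (N - 1 + 1)) x" using pw_add[of "N - 1" 1 a x] by simp
              also have "\<dots> = x" using N per that by simp
              finally show ?thesis .
            qed
            thus ?thesis using eV by (auto simp: image_iff) (metis subsetD)
          qed
          also have "\<dots> = (a ^^ (N - 1 + k)) ` {u0, v0}" using k by (simp add: pw_add image_comp comp_def)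
          finally show "e \<in> ?S" using e by blast
        next
          assume "e \<in> ?S"
          then obtain k where k: "e = (a ^^ k) ` {u0, v0}" by blast
          hence "a ` e = (a ^^ Suc k) ` {u0, v0}" by (simp add: image_comp comp_def)
          thus "a ` e \<in> ?S" using ae by blast
        qed
      qed
    qed auto
    thus False using nt by blast
  qed
  show ?thesis
  proof (cases "\<forall>k. (a ^^ k) u0 = u0 \<longleftrightarrow> (a ^^ k) v0 = v0")
    case True
    obtain b where b: "graph_automorphism V E b" "b u0 = v0" "b v0 = u0"
      using reflection[OF G aut per N u0 v0 orb E0 True] by blast
    have "b ` {u0, v0} = {u0, v0}" using b by auto
    hence "\<forall>v\<in>V. b v = v" by (rule Kfix[OF G P2 adm b(1) E0])
    thus ?thesis using b u0 uv by auto
  next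
    case False
    then obtain k where k: "\<not> ((a ^^ k) u0 = u0 \<longleftrightarrow> (a ^^ k) v0 = v0)" by blast
    have ne: "E \<noteq> {}" using E0 by blast
    show ?thesis
    proof (cases "(a ^^ k) u0 = u0")
      case True
      hence "(a ^^ k) v0 \<noteq> v0" using k by blast
      hence "\<forall>e\<in>E. u0 \<in> e" using star_from[OF G P2 aut u0 v0 E0 True] by blast
      thus ?thesis using star_case[OF G conn P2 adm u0 _ ne aut nt] by blast
    next
      case False
      hence "(a ^^ k) v0 = v0" using k by blast
      moreover have E0': "{v0, u0} \<in> E" using E0 by (simp add: insert_commute)
      ultimately have "\<forall>e\<in>E. v0 \<in> e" using star_from[OF G P2 aut v0 u0 E0'] False by blast
      thus ?thesis using star_case[OF G conn P2 adm v0 _ ne aut nt] by blast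
    qed
  qed
qed

theorem mainTheorem3:
  fixes V :: "'a set" and E :: "'a set set"
  assumes "simple_graph V E"
    and "connected_graph V E"
    and "admits_distinguishing_edge_coloring V E"
  shows "theta' V E = 2 \<longleftrightarrow> graph_iso V E K12_V K12_E"
proof
  assume "theta' V E = 2"
  thus "graph_iso V E K12_V K12_E" using forward assms by blast
next
  assume "graph_iso V E K12_V K12_E"
  then obtain a b1 b2 where "a \<noteq> b1" "a \<noteq> b2" "b1 \<noteq> b2" "V = {a, b1, b2}" "E = {{a, b1}, {a, b2}}"
    using iso_struct assms(1) by blast
  thus "theta' V E = 2" by (rule P3_theta)
qed

end
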